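(* Let $M\in\mathbb{R}^{D\times D}$ be symmetric positive semidefinite, let $L_*$ be a $d$-dimensional subspace of $\mathbb{R}^D$ with $1\le d<D$, and let $x=\sigma_{D-d}(U_{L_*^\perp}^\top MU_{L_*^\perp})$, $y=\sigma_d(U_{L_*}^\top MU_{L_*})$, $z=\|U_{L_*}^\top MU_{L_*^\perp}\|$. Then $$\sigma_D(M)\ge\frac{(x+y)-\sqrt{(x-y)^2+4z^2}}{2}.$$ If moreover $z\le\sqrt{xy}/2$, then $\sigma_D(M)\ge\min(x,y)/3$.
   Context: $U_{L_*}\in\mathbb{R}^{D\times d}$ and $U_{L_*^\perp}\in\mathbb{R}^{D\times(D-d)}$ have orthonormal columns spanning $L_*$ and its orthogonal complement. $\sigma_i(\cdot)$ denotes the $i$-th largest eigenvalue of a symmetric matrix, and $\|\cdot\|$ is the spectral norm. *)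

theory Defs
  imports "Jordan_Normal_Form.Char_Poly" "HOL-Computational_Algebra.Polynomial"
begin

text \<open>Eigenvalues (with algebraic multiplicity) of a square real matrix, sorted in
  decreasing order; for a real symmetric matrix these are all its eigenvalues.
  sigma A i is the i-th largest eigenvalue (1-based).\<close>
definition eigs_desc :: "real mat \<Rightarrow> real list" where
  "eigs_desc A = rev (sorted_list_of_multiset (proots (char_poly A)))"

definition sigma :: "real mat \<Rightarrow> nat \<Rightarrow> real" where
  "sigma A i = eigs_desc A ! (i - 1)"

definition vnorm :: "real vec \<Rightarrow> real" where
  "vnorm v = sqrt (v \<bullet> v)"

definition spec_norm :: "real mat \<Rightarrow> real" where
  "spec_norm A = Sup {vnorm (A *\<^sub>v v) | v. v \<in> carrier_vec (dim_col A) \<and> vnorm v = 1}"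

definition psd :: "real mat \<Rightarrow> nat \<Rightarrow> bool" where
  "psd M n \<longleftrightarrow> M \<in> carrier_mat n n \<and> M\<^sup>T = M \<and>
     (\<forall>v \<in> carrier_vec n. v \<bullet> (M *\<^sub>v v) \<ge> 0)"

end

theory Submission imports Defs "Jordan_Normal_Form.Schur_Decomposition" "HOL-Computational_Algebra.Fundamental_Theorem_Algebra" begin

lemma real_vec_conj[simp]: "conjugate (w :: real vec) = w"
  by (auto simp: conjugate_vec_def)

lemma real_sprod_self_ge0: "(v :: real vec) \<bullet> v \<ge> 0"
  unfolding scalar_prod_def by (auto intro: sum_nonneg)

lemma orth_completion:
  fixes u :: "real vec"
  assumes u: "u \<in> carrier_vec n" and u1: "u \<bullet> u = 1"
  shows "\<exists>W. W \<in> carrier_mat n n \<and> W\<^sup>T * W = 1\<^sub>m n \<and> col W 0 = u"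
proof -
  interpret cof_vec_space n "TYPE(real)" .
  have u0: "u \<noteq> 0\<^sub>v n" using u1 u by auto
  define b where "b = basis_completion u"
  note bc = basis_completion[OF u u0, folded b_def]
  obtain vs where bv: "b = u # vs" using bc(7) bc(6) u0 u
    by (cases b) auto
  define ws where "ws = gram_schmidt n b"
  note gs = gram_schmidt_result[OF bc(2) bc(4) bc(5) ws_def]
  have hd: "hd ws = u" unfolding ws_def bv using u by simp
  have lws: "length ws = n" using gs bc by simp
  have n0: "n > 0" using u0 u by (cases n) auto
  have ws0: "ws ! 0 = u" using hd lws n0 by (cases ws) auto
  have wsc: "\<And>i. i < n \<Longrightarrow> ws ! i \<in> carrier_vec n" using gs lws by auto
  have orth: "\<And>i j. i < n \<Longrightarrow> j < n \<Longrightarrow> (ws ! i \<bullet> ws ! j = 0) = (i \<noteq> j)"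
    using gs(2) lws unfolding corthogonal_def by (auto simp: scalar_prod_def)
  define ws' where "ws' = map (\<lambda>w. (1 / sqrt (w \<bullet> w)) \<cdot>\<^sub>v w) ws"
  define W where "W = mat_of_cols n ws'"
  have lws': "length ws' = n" unfolding ws'_def using lws by simp
  have ws'i: "\<And>i. i < n \<Longrightarrow> ws' ! i = (1 / sqrt (ws ! i \<bullet> ws ! i)) \<cdot>\<^sub>v ws ! i"
    unfolding ws'_def using lws by simp
  have W: "W \<in> carrier_mat n n" unfolding W_def using mat_of_cols_carrier(1)[of n ws'] lws' by simp
  have colW: "\<And>i. i < n \<Longrightarrow> col W i = ws' ! i"
    unfolding W_def using lws' ws'i wsc by (simp add: col_mat_of_cols)
  have ip: "ws' ! i \<bullet> ws' ! j = (if i = j then 1 else 0)" if i: "i < n" and j: "j < n" for i j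
  proof -
    have pos: "ws ! i \<bullet> ws ! i > 0"
      using orth[OF i i] real_sprod_self_ge0[of "ws ! i"] by linarith
    have "ws' ! i \<bullet> ws' ! j = (1 / sqrt (ws ! i \<bullet> ws ! i)) * (1 / sqrt (ws ! j \<bullet> ws ! j)) * (ws ! i \<bullet> ws ! j)"
      using ws'i[OF i] ws'i[OF j] wsc[OF i] wsc[OF j] by simp
    then show ?thesis using orth[OF i j] pos
      by (cases "i = j") (auto simp: field_simps)
  qed
  have "W\<^sup>T * W = 1\<^sub>m n"
  proof (rule eq_matI)
    fix i j assume i: "i < dim_row (1\<^sub>m n)" and j: "j < dim_col (1\<^sub>m n)"
    then have i: "i < n" and j: "j < n" by auto
    have "(W\<^sup>T * W) $$ (i, j) = col W i \<bullet> col W j"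
      using W i j by (simp add: row_transpose)
    also have "\<dots> = 1\<^sub>m n $$ (i, j)" using colW i j ip by simp
    finally show "(W\<^sup>T * W) $$ (i, j) = 1\<^sub>m n $$ (i, j)" .
  qed (use W in auto)
  moreover have "col W 0 = u" using colW[OF n0] ws'i[OF n0] ws0 u1 u by simp
  ultimately show ?thesis using W by blast
qed


lemma sym_real_eigen:
  fixes A :: "real mat"
  assumes A: "A \<in> carrier_mat n n" and sym: "A\<^sup>T = A" and n0: "n > 0"
  shows "\<exists>e u. u \<in> carrier_vec n \<and> u \<bullet> u = 1 \<and> A *\<^sub>v u = e \<cdot>\<^sub>v u"
proof -
  define Ac where "Ac = (of_real_hom.mat_hom A :: complex mat)"
  have Ac: "Ac \<in> carrier_mat n n" unfolding Ac_def using A by auto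
  have cp: "char_poly Ac = map_poly of_real (char_poly A)"
    unfolding Ac_def by (rule of_real_hom.char_poly_hom[OF A])
  have "degree (char_poly Ac) = n" using degree_monic_char_poly[OF Ac] by simp
  then have "\<not> constant (poly (char_poly Ac))" using n0 by (simp add: constant_degree)
  then obtain z where z: "poly (char_poly Ac) z = 0" using fundamental_theorem_of_algebra by blast
  then have "eigenvalue Ac z" using eigenvalue_root_char_poly[OF Ac] by simp
  then have "eigenvector Ac (find_eigenvector Ac z) z" by (rule find_eigenvector[OF Ac])
  then obtain v where v: "v \<in> carrier_vec n" and v0: "v \<noteq> 0\<^sub>v n" and ev: "Ac *\<^sub>v v = z \<cdot>\<^sub>v v"
    unfolding eigenvector_def using Ac by auto
  define N where "N = (\<Sum>i<n. cnj (v $ i) * v $ i)"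
  define RN where "RN = (\<Sum>i<n. (cmod (v $ i))\<^sup>2)"
  have NR: "N = of_real RN" unfolding N_def RN_def
    by (auto simp: mult.commute intro!: sum.cong) (metis complex_norm_square of_real_power)
  obtain k where k: "k < n" "v $ k \<noteq> 0" using v v0 by (metis eq_vecI carrier_vecD index_zero_vec)
  have "RN \<ge> (cmod (v $ k))\<^sup>2" unfolding RN_def
    by (rule member_le_sum) (use k in auto)
  moreover have "(cmod (v $ k))\<^sup>2 > 0" using k by simp
  ultimately have RN0: "RN \<noteq> 0" by linarith
  define f where "f = (\<lambda>i j. of_real (A $$ (i, j)) * cnj (v $ i) * v $ j :: complex)"
  define S where "S = (\<Sum>i<n. \<Sum>j<n. f i j)"
  have Avi: "(Ac *\<^sub>v v) $ i = (\<Sum>j<n. of_real (A $$ (i, j)) * v $ j)" if "i < n" for i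
    using that A v unfolding Ac_def
    by (auto simp: scalar_prod_def row_def lessThan_atLeast0 intro!: sum.cong)
  have "S = (\<Sum>i<n. cnj (v $ i) * (Ac *\<^sub>v v) $ i)"
    unfolding S_def f_def by (auto simp: Avi sum_distrib_left intro!: sum.cong)
  also have "\<dots> = z * N" unfolding N_def ev using v
    by (auto simp: sum_distrib_left intro!: sum.cong)
  finally have S1: "S = z * N" .
  have symA: "A $$ (i, j) = A $$ (j, i)" if "i < n" "j < n" for i j
    using sym that A by (metis carrier_matD index_transpose_mat(1))
  have "cnj S = (\<Sum>i<n. \<Sum>j<n. f j i)"
    unfolding S_def f_def cnj_sum
    by (auto intro!: sum.cong simp: symA mult.commute mult.left_commute)
  also have "\<dots> = S" unfolding S_def by (rule sum.swap)
  finally have "cnj S = S" .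
  then have "cnj z * N = z * N" using S1 NR by simp
  then have zz: "cnj z = z" using RN0 NR by simp
  define r where "r = Re z"
  have zr: "z = of_real r" unfolding r_def using zz by (metis Reals_cnj_iff complex_is_Real_iff of_real_Re)
  have "of_real (poly (char_poly A) r) = (0 :: complex)"
    using z unfolding cp zr of_real_hom.poly_map_poly .
  then have "poly (char_poly A) r = 0" by simp
  then have "eigenvalue A r" using eigenvalue_root_char_poly[OF A] by simp
  then have "eigenvector A (find_eigenvector A r) r" by (rule find_eigenvector[OF A])
  then obtain w where w: "w \<in> carrier_vec n" and w0: "w \<noteq> 0\<^sub>v n" and evw: "A *\<^sub>v w = r \<cdot>\<^sub>v w"
    unfolding eigenvector_def using A by auto
  have wpos: "w \<bullet> w > 0"
  proof -
    obtain k where k: "k < n" "w $ k \<noteq> 0" using w w0 by (metis eq_vecI carrier_vecD index_zero_vec)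
    have "w \<bullet> w = (\<Sum>i<n. (w $ i)\<^sup>2)" using w
      by (auto simp: scalar_prod_def power2_eq_square lessThan_atLeast0)
    also have "\<dots> \<ge> (w $ k)\<^sup>2" by (rule member_le_sum) (use k in auto)
    finally show ?thesis using k by (smt (verit) zero_less_power2)
  qed
  define u where "u = (1 / sqrt (w \<bullet> w)) \<cdot>\<^sub>v w"
  have "u \<in> carrier_vec n" unfolding u_def using w by simp
  moreover have "u \<bullet> u = 1" unfolding u_def using w wpos by simp
  moreover have "A *\<^sub>v u = r \<cdot>\<^sub>v u" unfolding u_def using w A evw
    by (simp add: mult_mat_vec smult_smult_assoc mult.commute)
  ultimately show ?thesis by blast
qed


lemma spectral:
  fixes A :: "real mat"
  assumes "A \<in> carrier_mat n n" and "A\<^sup>T = A"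
  shows "\<exists>Q L. Q \<in> carrier_mat n n \<and> L \<in> carrier_mat n n \<and> Q\<^sup>T * Q = 1\<^sub>m n \<and>
            diagonal_mat L \<and> A = Q * L * Q\<^sup>T"
  using assms
proof (induction n arbitrary: A)
  case 0
  then show ?case
    by (intro exI[of _ "1\<^sub>m 0"] exI[of _ A]) (auto simp: diagonal_mat_def)
next
  case (Suc m)
  define n where "n = Suc m"
  have A: "A \<in> carrier_mat n n" and sym: "A\<^sup>T = A" using Suc.prems n_def by auto
  obtain e u where u: "u \<in> carrier_vec n" and u1: "u \<bullet> u = 1" and ev: "A *\<^sub>v u = e \<cdot>\<^sub>v u"
    using sym_real_eigen[OF A sym] n_def by auto
  obtain W where W: "W \<in> carrier_mat n n" and WtW: "W\<^sup>T * W = 1\<^sub>m n" and W0: "col W 0 = u"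
    using orth_completion[OF u u1] by auto
  have Wt: "W\<^sup>T \<in> carrier_mat n n" using W by simp
  have WWt: "W * W\<^sup>T = 1\<^sub>m n" using mat_mult_left_right_inverse[OF Wt W WtW] .
  define A' where "A' = W\<^sup>T * A * W"
  have A': "A' \<in> carrier_mat n n" unfolding A'_def using W A by simp
  have symA': "A'\<^sup>T = A'"
  proof -
    have "A'\<^sup>T = W\<^sup>T * (W\<^sup>T * A)\<^sup>T" unfolding A'_def
      using W A by (subst transpose_mult[of _ n n _ n]) auto
    also have "(W\<^sup>T * A)\<^sup>T = A * W" using W A sym
      by (subst transpose_mult[of _ n n _ n]) auto
    finally show ?thesis unfolding A'_def using W A
      by (simp add: assoc_mult_mat[of _ n n _ n _ n])
  qed
  have col0: "col A' 0 = e \<cdot>\<^sub>v unit_vec n 0"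
  proof -
    have "col A' 0 = (W\<^sup>T * A) *\<^sub>v col W 0" unfolding A'_def
      using W A by (subst col_mult2[of _ n n]) (auto simp: n_def)
    also have "\<dots> = W\<^sup>T *\<^sub>v (A *\<^sub>v u)" using W0 W A u by (simp add: assoc_mult_mat_vec)
    also have "\<dots> = e \<cdot>\<^sub>v (W\<^sup>T *\<^sub>v col W 0)" using ev W0 Wt u by (simp add: mult_mat_vec)
    also have "W\<^sup>T *\<^sub>v col W 0 = col (W\<^sup>T * W) 0"
      using W by (subst col_mult2[of _ n n]) (auto simp: n_def)
    also have "\<dots> = unit_vec n 0" unfolding WtW by (simp add: n_def)
    finally show ?thesis .
  qed
  have Ai0: "A' $$ (i, 0) = (if i = 0 then e else 0)" if "i < n" for i
  proof -
    have "A' $$ (i, 0) = col A' 0 $ i" using that A' by (simp add: n_def)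
    then show ?thesis unfolding col0 using that by (auto simp: unit_vec_def)
  qed
  have A0j: "A' $$ (0, j) = (if j = 0 then e else 0)" if "j < n" for j
  proof -
    have "A' $$ (0, j) = A'\<^sup>T $$ (j, 0)" using that A' by (simp add: n_def)
    then show ?thesis unfolding symA' using Ai0[OF that] by simp
  qed
  define A3 where "A3 = mat m m (\<lambda>(i, j). A' $$ (Suc i, Suc j))"
  define A1 where "A1 = (mat 1 1 (\<lambda>_. e) :: real mat)"
  have A3: "A3 \<in> carrier_mat m m" unfolding A3_def by simp
  have A1: "A1 \<in> carrier_mat 1 1" unfolding A1_def by simp
  have symA3: "A3\<^sup>T = A3"
  proof (rule eq_matI)
    fix i j assume "i < dim_row A3" "j < dim_col A3"
    then have ij: "i < m" "j < m" using A3 by auto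
    have "A' $$ (Suc j, Suc i) = A'\<^sup>T $$ (Suc i, Suc j)" using ij A' by (simp add: n_def)
    then show "A3\<^sup>T $$ (i, j) = A3 $$ (i, j)" unfolding A3_def symA' using ij by simp
  qed (use A3 in auto)
  have A'blk: "A' = four_block_mat A1 (0\<^sub>m 1 m) (0\<^sub>m m 1) A3"
  proof (rule eq_matI)
    fix i j assume "i < dim_row (four_block_mat A1 (0\<^sub>m 1 m) (0\<^sub>m m 1) A3)"
      "j < dim_col (four_block_mat A1 (0\<^sub>m 1 m) (0\<^sub>m m 1) A3)"
    then have ij: "i < n" "j < n" using A1 A3 by (auto simp: n_def)
    show "A' $$ (i, j) = four_block_mat A1 (0\<^sub>m 1 m) (0\<^sub>m m 1) A3 $$ (i, j)"
    proof (cases "i = 0 \<or> j = 0")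
      case True
      then show ?thesis using Ai0 A0j ij A1 A3 by (auto simp: A1_def n_def)
    next
      case False
      then obtain i' j' where "i = Suc i'" "j = Suc j'" by (metis not0_implies_Suc)
      then show ?thesis using ij A1 A3 by (auto simp: A3_def n_def)
    qed
  qed (use A' A1 A3 in \<open>auto simp: n_def\<close>)
  obtain Q3 L3 where Q3: "Q3 \<in> carrier_mat m m" and L3: "L3 \<in> carrier_mat m m"
    and Q3tQ3: "Q3\<^sup>T * Q3 = 1\<^sub>m m" and dL3: "diagonal_mat L3" and A3eq: "A3 = Q3 * L3 * Q3\<^sup>T"
    using Suc.IH[OF A3 symA3] by blast
  define F where "F = four_block_mat (1\<^sub>m 1) (0\<^sub>m 1 m) (0\<^sub>m m 1) Q3"
  define L where "L = four_block_mat A1 (0\<^sub>m 1 m) (0\<^sub>m m 1) L3"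
  have F: "F \<in> carrier_mat n n" unfolding F_def n_def using Q3 by auto
  have L: "L \<in> carrier_mat n n" unfolding L_def n_def using L3 A1 by auto
  have Ft: "F\<^sup>T = four_block_mat (1\<^sub>m 1) (0\<^sub>m 1 m) (0\<^sub>m m 1) Q3\<^sup>T"
    unfolding F_def using Q3 by (subst transpose_four_block_mat) auto
  have FtF: "F\<^sup>T * F = 1\<^sub>m n"
    unfolding Ft unfolding F_def using Q3 Q3tQ3
    by (subst mult_four_block_mat) (auto simp: n_def four_block_one_mat[of 1 m, simplified])
  have FLFt: "F * L * F\<^sup>T = A'"
  proof -
    have FL: "F * L = four_block_mat A1 (0\<^sub>m 1 m) (0\<^sub>m m 1) (Q3 * L3)"
      unfolding F_def L_def using Q3 L3 A1 by (subst mult_four_block_mat) auto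
    have "F * L * F\<^sup>T = four_block_mat A1 (0\<^sub>m 1 m) (0\<^sub>m m 1) (Q3 * L3 * Q3\<^sup>T)"
      unfolding Ft FL using Q3 L3 A1 by (subst mult_four_block_mat) auto
    then show ?thesis unfolding A'blk A3eq .
  qed
  define Q where "Q = W * F"
  have Q: "Q \<in> carrier_mat n n" unfolding Q_def using W F by simp
  have "Q\<^sup>T * Q = F\<^sup>T * (W\<^sup>T * W) * F" unfolding Q_def using W F
    by (simp add: transpose_mult assoc_mult_mat[of _ n n _ n _ n])
  also have "\<dots> = 1\<^sub>m n" using WtW FtF F by simp
  finally have QtQ: "Q\<^sup>T * Q = 1\<^sub>m n" .
  have "Q * L * Q\<^sup>T = W * (F * L * F\<^sup>T) * W\<^sup>T" unfolding Q_def using W F L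
    by (simp add: transpose_mult assoc_mult_mat[of _ n n _ n _ n])
  also have "\<dots> = (W * W\<^sup>T) * A * (W * W\<^sup>T)" unfolding FLFt A'_def using W A
    by (simp add: assoc_mult_mat[of _ n n _ n _ n])
  also have "\<dots> = A" unfolding WWt using A by simp
  finally have AQ: "A = Q * L * Q\<^sup>T" by simp
  have dL: "diagonal_mat L" unfolding diagonal_mat_def
  proof (intro allI impI)
    fix i j assume "i < dim_row L" "j < dim_col L" "i \<noteq> j"
    then show "L $$ (i, j) = 0" unfolding L_def using A1 L3 dL3
      by (auto simp: diagonal_mat_def A1_def)
  qed
  show ?case using Q L QtQ dL AQ unfolding n_def by blast
qed


lemma quad_diag:
  fixes L :: "real mat"
  assumes L: "L \<in> carrier_mat n n" and dL: "diagonal_mat L" and w: "w \<in> carrier_vec n"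
  shows "w \<bullet> (L *\<^sub>v w) = (\<Sum>i<n. L $$ (i, i) * (w $ i)\<^sup>2)"
proof -
  have Lw: "(L *\<^sub>v w) $ i = L $$ (i, i) * w $ i" if i: "i < n" for i
  proof -
    have "(L *\<^sub>v w) $ i = (\<Sum>j\<in>{0..<n}. L $$ (i, j) * w $ j)"
      using L w i by (simp add: scalar_prod_def row_def)
    also have "\<dots> = (\<Sum>j\<in>{0..<n}. if j = i then L $$ (i, i) * w $ i else 0)"
      using dL L i unfolding diagonal_mat_def by (intro sum.cong) auto
    also have "\<dots> = L $$ (i, i) * w $ i" using i by simp
    finally show ?thesis .
  qed
  show ?thesis unfolding scalar_prod_def lessThan_atLeast0 using L
    by (intro sum.cong) (auto simp del: index_mult_mat_vec simp add: Lw power2_eq_square)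
qed

lemma sym_min_eig:
  fixes A :: "real mat"
  assumes A: "A \<in> carrier_mat n n" and sym: "A\<^sup>T = A" and n0: "n > 0"
  shows "(\<forall>v \<in> carrier_vec n. sigma A n * (v \<bullet> v) \<le> v \<bullet> (A *\<^sub>v v)) \<and>
         (\<exists>q \<in> carrier_vec n. q \<bullet> q = 1 \<and> q \<bullet> (A *\<^sub>v q) = sigma A n)"
proof -
  obtain Q L where Q: "Q \<in> carrier_mat n n" and L: "L \<in> carrier_mat n n"
    and QtQ: "Q\<^sup>T * Q = 1\<^sub>m n" and dL: "diagonal_mat L" and AQ: "A = Q * L * Q\<^sup>T"
    using spectral[OF A sym] by blast
  have Qt: "Q\<^sup>T \<in> carrier_mat n n" using Q by simp
  have QQt: "Q * Q\<^sup>T = 1\<^sub>m n" using mat_mult_left_right_inverse[OF Qt Q QtQ] .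
  define es where "es = diag_mat L"
  have les: "length es = n" unfolding es_def diag_mat_def using L by simp
  have esi: "es ! i = L $$ (i, i)" if "i < n" for i
    unfolding es_def diag_mat_def using L that by simp
  have "similar_mat_wit A L Q Q\<^sup>T" unfolding similar_mat_wit_def Let_def
    using A L Q QtQ QQt AQ by auto
  then have "similar_mat A L" unfolding similar_mat_def by blast
  then have "char_poly A = char_poly L" by (rule char_poly_similar)
  also have "\<dots> = (\<Prod>a\<leftarrow>es. [:- a, 1:])" unfolding es_def
    by (rule char_poly_upper_triangular[OF L]) (use dL L in \<open>auto simp: diagonal_mat_def upper_triangular_def\<close>)
  finally have cp: "char_poly A = (\<Prod>a\<leftarrow>es. [:- a, 1:])" .
  have "proots (\<Prod>a\<leftarrow>es. [:- a, 1:]) = mset es"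
  proof (induction es)
    case Nil then show ?case by simp
  next
    case (Cons a es)
    have "(\<Prod>a\<leftarrow>es. [:- a, 1:]) \<noteq> 0" by (auto simp: prod_list_zero_iff)
    then have "proots ([:- a, 1:] * (\<Prod>a\<leftarrow>es. [:- a, 1:])) = proots [:- a, 1:] + proots (\<Prod>a\<leftarrow>es. [:- a, 1:])"
      by (intro proots_mult) auto
    then show ?case using Cons by (simp add: proots_linear_factor del: mult_pCons_left)
  qed
  then have ed: "eigs_desc A = rev (sort es)" unfolding eigs_desc_def cp
    by (simp add: sorted_list_of_multiset_mset)
  define s where "s = sort es ! 0"
  have sig: "sigma A n = s" unfolding sigma_def ed s_def using les n0
    by (simp add: rev_nth)
  have "s \<in> set es" unfolding s_def using les n0
    by (metis length_sort nth_mem set_sort)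
  then obtain k where k: "k < n" "es ! k = s" using les by (metis in_set_conv_nth)
  have smin: "s \<le> es ! i" if "i < n" for i
  proof -
    have "es ! i \<in> set (sort es)" using that les by simp
    then obtain j where j: "j < n" "sort es ! j = es ! i" using les
      by (metis in_set_conv_nth length_sort)
    show ?thesis unfolding s_def using j les sorted_nth_mono[of "sort es" 0 j] by simp
  qed
  have rq: "v \<bullet> (A *\<^sub>v v) = (Q\<^sup>T *\<^sub>v v) \<bullet> (L *\<^sub>v (Q\<^sup>T *\<^sub>v v))" if v: "v \<in> carrier_vec n" for v
  proof -
    have "A *\<^sub>v v = Q *\<^sub>v (L *\<^sub>v (Q\<^sup>T *\<^sub>v v))" unfolding AQ using Q L v
      by (simp add: assoc_mult_mat_vec[of _ n n _ n])
    then have "v \<bullet> (A *\<^sub>v v) = v \<bullet> (Q *\<^sub>v (L *\<^sub>v (Q\<^sup>T *\<^sub>v v)))" by simp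
    also have "\<dots> = (Q\<^sup>T *\<^sub>v v) \<bullet> (L *\<^sub>v (Q\<^sup>T *\<^sub>v v))"
      using transpose_vec_mult_scalar[OF Q, of "L *\<^sub>v (Q\<^sup>T *\<^sub>v v)" v] Q L v by simp
    finally show ?thesis .
  qed
  have nq: "v \<bullet> v = (Q\<^sup>T *\<^sub>v v) \<bullet> (Q\<^sup>T *\<^sub>v v)" if v: "v \<in> carrier_vec n" for v
  proof -
    have "(Q\<^sup>T *\<^sub>v v) \<bullet> (Q\<^sup>T *\<^sub>v v) = v \<bullet> (Q *\<^sub>v (Q\<^sup>T *\<^sub>v v))"
      using transpose_vec_mult_scalar[OF Q, of "Q\<^sup>T *\<^sub>v v" v] Q v by simp
    also have "Q *\<^sub>v (Q\<^sup>T *\<^sub>v v) = v" using Q v QQt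
      by (metis Qt assoc_mult_mat_vec one_mult_mat_vec)
    finally show ?thesis by simp
  qed
  have part1: "sigma A n * (v \<bullet> v) \<le> v \<bullet> (A *\<^sub>v v)" if v: "v \<in> carrier_vec n" for v
  proof -
    define w where "w = Q\<^sup>T *\<^sub>v v"
    have w: "w \<in> carrier_vec n" unfolding w_def using Q v by simp
    have "w \<bullet> w = (\<Sum>i<n. (w $ i)\<^sup>2)" using w
      by (auto simp: scalar_prod_def power2_eq_square lessThan_atLeast0)
    then have "s * (w \<bullet> w) = (\<Sum>i<n. s * (w $ i)\<^sup>2)" by (simp add: sum_distrib_left)
    also have "\<dots> \<le> (\<Sum>i<n. L $$ (i, i) * (w $ i)\<^sup>2)"
      using smin esi by (intro sum_mono mult_right_mono) auto
    also have "\<dots> = w \<bullet> (L *\<^sub>v w)" using quad_diag[OF L dL w] by simp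
    finally show ?thesis using rq[OF v] nq[OF v] sig unfolding w_def by simp
  qed
  define q where "q = Q *\<^sub>v unit_vec n k"
  have q: "q \<in> carrier_vec n" unfolding q_def using Q by simp
  have Qtq: "Q\<^sup>T *\<^sub>v q = unit_vec n k" unfolding q_def using Q QtQ
    by (metis Qt assoc_mult_mat_vec one_mult_mat_vec unit_vec_carrier)
  have "q \<bullet> q = 1" using nq[OF q] Qtq k by simp
  moreover have "q \<bullet> (A *\<^sub>v q) = sigma A n"
  proof -
    have "q \<bullet> (A *\<^sub>v q) = (\<Sum>i<n. L $$ (i, i) * (unit_vec n k $ i)\<^sup>2)"
      using rq[OF q] quad_diag[OF L dL, of "unit_vec n k"] Qtq by simp
    also have "\<dots> = (\<Sum>i<n. if i = k then L $$ (k, k) else 0)"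
      by (intro sum.cong) (auto simp: unit_vec_def)
    also have "\<dots> = L $$ (k, k)" using k by simp
    finally show ?thesis using esi k sig by simp
  qed
  ultimately show ?thesis using part1 q by blast
qed


lemma alg1:
  fixes s t x y z :: real
  assumes s: "s \<ge> 0" and t: "t \<ge> 0" and st: "s\<^sup>2 + t\<^sup>2 = 1"
  shows "y * s\<^sup>2 + x * t\<^sup>2 - 2 * \<bar>z\<bar> * s * t \<ge> ((x + y) - sqrt ((x - y)\<^sup>2 + 4 * z\<^sup>2)) / 2"
proof -
  define r where "r = sqrt ((x - y)\<^sup>2 + 4 * z\<^sup>2)"
  have r2: "r\<^sup>2 = (x - y)\<^sup>2 + 4 * z\<^sup>2" unfolding r_def by simp
  have r0: "r \<ge> 0" unfolding r_def by simp
  have rxy: "r \<ge> \<bar>x - y\<bar>" unfolding r_def by (rule real_le_rsqrt) simp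
  define \<alpha> where "\<alpha> = (r + y - x) / 2"
  define \<beta> where "\<beta> = (r - y + x) / 2"
  have a0: "\<alpha> \<ge> 0" and b0: "\<beta> \<ge> 0" unfolding \<alpha>_def \<beta>_def using rxy by auto
  have ab: "\<alpha> * \<beta> = z\<^sup>2" unfolding \<alpha>_def \<beta>_def using r2 by (simp add: power2_eq_square field_simps)
  have sq: "sqrt (\<alpha> * \<beta>) = \<bar>z\<bar>" using ab by simp
  have "0 \<le> (sqrt \<alpha> * s - sqrt \<beta> * t)\<^sup>2" by simp
  also have "\<dots> = \<alpha> * s\<^sup>2 + \<beta> * t\<^sup>2 - 2 * sqrt (\<alpha> * \<beta>) * s * t"
    using a0 b0 by (simp add: power2_diff power_mult_distrib real_sqrt_mult)
  finally have key: "2 * \<bar>z\<bar> * s * t \<le> \<alpha> * s\<^sup>2 + \<beta> * t\<^sup>2" using sq by simp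
  have "((x + y) - r) / 2 = ((x + y) - r) / 2 * (s\<^sup>2 + t\<^sup>2)" using st by simp
  also have "\<dots> = y * s\<^sup>2 + x * t\<^sup>2 - (\<alpha> * s\<^sup>2 + \<beta> * t\<^sup>2)"
    unfolding \<alpha>_def \<beta>_def by (simp add: field_simps)
  finally show ?thesis using key unfolding r_def by linarith
qed

lemma alg2:
  fixes x y z :: real
  assumes x: "x \<ge> 0" and y: "y \<ge> 0" and z: "z \<ge> 0" and zb: "z \<le> sqrt (x * y) / 2"
  shows "((x + y) - sqrt ((x - y)\<^sup>2 + 4 * z\<^sup>2)) / 2 \<ge> min x y / 3"
proof -
  have "2 * z \<le> sqrt (x * y)" using zb by simp
  then have "(2 * z)\<^sup>2 \<le> (sqrt (x * y))\<^sup>2" using z by (intro power_mono) auto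
  then have z2: "4 * z\<^sup>2 \<le> x * y" using x y by (simp add: power_mult_distrib)
  define m where "m = min x y"
  have m0: "m \<ge> 0" and mx: "m \<le> x" and my: "m \<le> y" and mxy: "m = x \<or> m = y"
    unfolding m_def using x y by auto
  have "(x - y)\<^sup>2 + 4 * z\<^sup>2 \<le> (x + y - 2 * m / 3)\<^sup>2"
  proof -
    have "(x - y)\<^sup>2 + x * y \<le> (x + y - 2 * m / 3)\<^sup>2"
      using mxy
    proof
      assume mx': "m = x"
      have e: "(x + y - 2 * m / 3)\<^sup>2 - ((x - y)\<^sup>2 + x * y) = x * (15 * y - 8 * x) / 9"
        unfolding mx' by (simp add: power2_eq_square algebra_simps)
      have "x * (15 * y - 8 * x) \<ge> 0" using x my mx' by (intro mult_nonneg_nonneg) auto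
      then show ?thesis using e by linarith
    next
      assume my': "m = y"
      have e: "(x + y - 2 * m / 3)\<^sup>2 - ((x - y)\<^sup>2 + x * y) = y * (15 * x - 8 * y) / 9"
        unfolding my' by (simp add: power2_eq_square algebra_simps)
      have "y * (15 * x - 8 * y) \<ge> 0" using y mx my' by (intro mult_nonneg_nonneg) auto
      then show ?thesis using e by linarith
    qed
    then show ?thesis using z2 by linarith
  qed
  then have "sqrt ((x - y)\<^sup>2 + 4 * z\<^sup>2) \<le> x + y - 2 * m / 3"
    using mx my m0 by (intro real_le_lsqrt) auto
  then have "m / 3 \<le> ((x + y) - sqrt ((x - y)\<^sup>2 + 4 * z\<^sup>2)) / 2" by (simp add: field_simps)
  then show ?thesis unfolding m_def .
qed

lemma cauchy_schwarz_vec: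
  fixes a c :: "real vec"
  assumes a: "a \<in> carrier_vec n" and c: "c \<in> carrier_vec n"
  shows "\<bar>a \<bullet> c\<bar> \<le> vnorm a * vnorm c"
proof -
  define X where "X = a \<bullet> c"
  define Aa where "Aa = a \<bullet> a"
  define Cc where "Cc = c \<bullet> c"
  have X: "X = (\<Sum>i<n. a $ i * c $ i)" unfolding X_def using a c
    by (simp add: scalar_prod_def lessThan_atLeast0)
  have Aa: "Aa = (\<Sum>i<n. (a $ i)\<^sup>2)" unfolding Aa_def using a
    by (simp add: scalar_prod_def lessThan_atLeast0 power2_eq_square)
  have Cc: "Cc = (\<Sum>i<n. (c $ i)\<^sup>2)" unfolding Cc_def using c
    by (simp add: scalar_prod_def lessThan_atLeast0 power2_eq_square)
  have quad: "0 \<le> Cc - 2 * t * X + t\<^sup>2 * Aa" for t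
  proof -
    have "0 \<le> (\<Sum>i<n. (c $ i - t * a $ i)\<^sup>2)" by (rule sum_nonneg) simp
    also have "\<dots> = Cc - 2 * t * X + t\<^sup>2 * Aa" unfolding X Aa Cc
      by (simp add: power2_diff sum.distrib sum_subtractf sum_distrib_left power_mult_distrib
          algebra_simps)
    finally show ?thesis .
  qed
  have A0: "Aa \<ge> 0" unfolding Aa by (rule sum_nonneg) simp
  have C0: "Cc \<ge> 0" unfolding Cc by (rule sum_nonneg) simp
  have "X\<^sup>2 \<le> Aa * Cc"
  proof (cases "Aa = 0")
    case True
    have "X = 0"
    proof (rule ccontr)
      assume "X \<noteq> 0"
      then show False using quad[of "(Cc + 1) / (2 * X)"] True by (simp add: field_simps)
    qed
    then show ?thesis using True by simp
  next
    case False
    then have Ap: "Aa > 0" using A0 by simp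
    have "0 \<le> Cc - 2 * (X / Aa) * X + (X / Aa)\<^sup>2 * Aa" by (rule quad)
    also have "\<dots> = Cc - X\<^sup>2 / Aa" using Ap by (simp add: power2_eq_square field_simps)
    finally show ?thesis using Ap by (simp add: field_simps mult.commute)
  qed
  then have "\<bar>X\<bar> \<le> sqrt (Aa * Cc)" by (intro real_le_rsqrt) simp
  then show ?thesis unfolding vnorm_def X_def Aa_def Cc_def by (simp add: real_sqrt_mult)
qed


lemma vnorm_sq: "(vnorm w)\<^sup>2 = w \<bullet> w"
  unfolding vnorm_def using real_sprod_self_ge0[of w] by simp

lemma vnorm_nonneg: "vnorm w \<ge> 0"
  unfolding vnorm_def using real_sprod_self_ge0[of w] by simp

lemma vnorm_smult: "vnorm (k \<cdot>\<^sub>v w) = \<bar>k\<bar> * vnorm w"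
proof -
  have w: "w \<in> carrier_vec (dim_vec w)" by simp
  have "(k \<cdot>\<^sub>v w) \<bullet> (k \<cdot>\<^sub>v w) = k\<^sup>2 * (w \<bullet> w)"
    using w by (simp add: power2_eq_square)
  then show ?thesis unfolding vnorm_def by (simp add: real_sqrt_mult)
qed

lemma spec_norm_bound:
  fixes B :: "real mat"
  assumes B: "B \<in> carrier_mat k l" and l0: "l > 0"
  shows "spec_norm B \<ge> 0 \<and> (\<forall>b \<in> carrier_vec l. vnorm (B *\<^sub>v b) \<le> spec_norm B * vnorm b)"
proof -
  define K where "K = (\<Sum>i<k. (vnorm (row B i))\<^sup>2)"
  have rowb: "(B *\<^sub>v v) \<bullet> (B *\<^sub>v v) \<le> K * (vnorm v)\<^sup>2" if v: "v \<in> carrier_vec l" for v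
  proof -
    have "(B *\<^sub>v v) \<bullet> (B *\<^sub>v v) = (\<Sum>i<k. ((B *\<^sub>v v) $ i)\<^sup>2)" using B
      by (simp add: scalar_prod_def lessThan_atLeast0 power2_eq_square)
    also have "\<dots> \<le> (\<Sum>i<k. (vnorm (row B i))\<^sup>2 * (vnorm v)\<^sup>2)"
    proof (rule sum_mono)
      fix i assume "i \<in> {..<k}"
      then have i: "i < k" by simp
      have "\<bar>(B *\<^sub>v v) $ i\<bar> \<le> vnorm (row B i) * vnorm v"
        using B i v by (simp add: cauchy_schwarz_vec[of _ l])
      then have "\<bar>(B *\<^sub>v v) $ i\<bar>\<^sup>2 \<le> (vnorm (row B i) * vnorm v)\<^sup>2"
        by (intro power_mono) auto
      then show "((B *\<^sub>v v) $ i)\<^sup>2 \<le> (vnorm (row B i))\<^sup>2 * (vnorm v)\<^sup>2"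
        by (simp add: power_mult_distrib)
    qed
    also have "\<dots> = K * (vnorm v)\<^sup>2" unfolding K_def by (simp add: sum_distrib_right)
    finally show ?thesis .
  qed
  define S where "S = {vnorm (B *\<^sub>v v) | v. v \<in> carrier_vec (dim_col B) \<and> vnorm v = 1}"
  have sn: "spec_norm B = Sup S" unfolding spec_norm_def S_def ..
  have K0: "K \<ge> 0" unfolding K_def by (rule sum_nonneg) simp
  have bdd: "bdd_above S"
  proof (rule bdd_aboveI)
    fix x assume "x \<in> S"
    then obtain v where v: "v \<in> carrier_vec l" "vnorm v = 1" and x: "x = vnorm (B *\<^sub>v v)"
      unfolding S_def using B by auto
    have "(B *\<^sub>v v) \<bullet> (B *\<^sub>v v) \<le> K" using rowb[OF v(1)] v(2) by simp
    then show "x \<le> sqrt K" unfolding x vnorm_def by simp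
  qed
  have e0: "unit_vec l 0 \<in> carrier_vec l" "vnorm (unit_vec l 0) = 1"
    using l0 by (auto simp: vnorm_def)
  have memS: "vnorm (B *\<^sub>v v) \<in> S" if "v \<in> carrier_vec l" "vnorm v = 1" for v
    unfolding S_def using B that by auto
  have "0 \<le> vnorm (B *\<^sub>v unit_vec l 0)" by (rule vnorm_nonneg)
  also have "\<dots> \<le> Sup S" by (rule cSup_upper[OF memS[OF e0] bdd])
  finally have pos: "spec_norm B \<ge> 0" unfolding sn .
  have "vnorm (B *\<^sub>v b) \<le> spec_norm B * vnorm b" if b: "b \<in> carrier_vec l" for b
  proof (cases "vnorm b = 0")
    case True
    have "(B *\<^sub>v b) \<bullet> (B *\<^sub>v b) \<le> 0" using rowb[OF b] True by simp
    then have "(B *\<^sub>v b) \<bullet> (B *\<^sub>v b) = 0" using real_sprod_self_ge0[of "B *\<^sub>v b"] by linarith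
    then show ?thesis using True by (simp add: vnorm_def)
  next
    case False
    define c where "c = vnorm b"
    have c0: "c > 0" using False vnorm_nonneg[of b] unfolding c_def by linarith
    define v where "v = (1 / c) \<cdot>\<^sub>v b"
    have v: "v \<in> carrier_vec l" unfolding v_def using b by simp
    have v1: "vnorm v = 1" unfolding v_def vnorm_smult c_def using c0 c_def by simp
    have "B *\<^sub>v v = (1 / c) \<cdot>\<^sub>v (B *\<^sub>v b)" unfolding v_def using B b by (simp add: mult_mat_vec)
    then have "vnorm (B *\<^sub>v v) = vnorm (B *\<^sub>v b) / c" using c0 by (simp add: vnorm_smult)
    moreover have "vnorm (B *\<^sub>v v) \<le> spec_norm B" unfolding sn by (rule cSup_upper[OF memS[OF v v1] bdd])
    ultimately have "vnorm (B *\<^sub>v b) = c * vnorm (B *\<^sub>v v)"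
      "vnorm (B *\<^sub>v v) \<le> spec_norm B" using c0 by (auto simp: field_simps)
    then show ?thesis using mult_left_mono[of "vnorm (B *\<^sub>v v)" "spec_norm B" c] c0
      unfolding c_def by (simp add: mult.commute)
  qed
  then show ?thesis using pos by blast
qed


lemma sym_congr:
  fixes X M :: "real mat"
  assumes X: "X \<in> carrier_mat n k" and M: "M \<in> carrier_mat n n" and sym: "M\<^sup>T = M"
  shows "(X\<^sup>T * M * X)\<^sup>T = X\<^sup>T * M * X"
proof -
  have "(X\<^sup>T * M * X)\<^sup>T = X\<^sup>T * (X\<^sup>T * M)\<^sup>T"
    using X M by (subst transpose_mult[of _ k n _ k]) auto
  also have "(X\<^sup>T * M)\<^sup>T = M * X" using X M sym
    by (subst transpose_mult[of _ k n _ n]) auto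
  finally show ?thesis using X M by (simp add: assoc_mult_mat[of _ k n _ n _ k])
qed

lemma quad_congr:
  fixes X Y M :: "real mat"
  assumes X: "X \<in> carrier_mat n k" and Y: "Y \<in> carrier_mat n k'" and M: "M \<in> carrier_mat n n"
    and a: "a \<in> carrier_vec k" and c: "c \<in> carrier_vec k'"
  shows "(X *\<^sub>v a) \<bullet> (M *\<^sub>v (Y *\<^sub>v c)) = a \<bullet> ((X\<^sup>T * M * Y) *\<^sub>v c)"
proof -
  have "(X\<^sup>T * M * Y) *\<^sub>v c = X\<^sup>T *\<^sub>v (M *\<^sub>v (Y *\<^sub>v c))"
    using X Y M c by (simp add: assoc_mult_mat_vec[of _ k n _ k'] assoc_mult_mat_vec[of _ n n _ k'])
  then show ?thesis
    using transpose_vec_mult_scalar[of "X\<^sup>T" k n "M *\<^sub>v (Y *\<^sub>v c)" a] X Y M a c by simp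
qed

lemma block_id:
  fixes U V :: "real mat"
  assumes U: "U \<in> carrier_mat D d" and V: "V \<in> carrier_mat D (D - d)" and dD: "d \<le> D"
    and UU: "U\<^sup>T * U = 1\<^sub>m d" and VV: "V\<^sup>T * V = 1\<^sub>m (D - d)" and UV: "U\<^sup>T * V = 0\<^sub>m d (D - d)"
  shows "U * U\<^sup>T + V * V\<^sup>T = 1\<^sub>m D"
proof -
  define e where "e = D - d"
  have De: "D = d + e" unfolding e_def using dD by simp
  have V: "V \<in> carrier_mat D e" using V unfolding e_def .
  define W where "W = four_block_mat U V (0\<^sub>m 0 d) (0\<^sub>m 0 e)"
  have W: "W \<in> carrier_mat D D" unfolding W_def using U V De by auto
  have Wt: "W\<^sup>T = four_block_mat U\<^sup>T (0\<^sub>m d 0) V\<^sup>T (0\<^sub>m e 0)"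
    unfolding W_def using U V by (subst transpose_four_block_mat) auto
  have VU: "V\<^sup>T * U = 0\<^sub>m e d"
  proof -
    have "V\<^sup>T * U = (U\<^sup>T * V)\<^sup>T" using U V by (simp add: transpose_mult)
    then show ?thesis using UV unfolding e_def by simp
  qed
  have "W\<^sup>T * W = four_block_mat (1\<^sub>m d) (0\<^sub>m d e) (0\<^sub>m e d) (1\<^sub>m e)"
    unfolding Wt unfolding W_def using U V UU VV UV VU unfolding e_def[symmetric]
    by (subst mult_four_block_mat) auto
  then have WtW: "W\<^sup>T * W = 1\<^sub>m D" unfolding four_block_one_mat De .
  have Wt': "W\<^sup>T \<in> carrier_mat D D" using W by simp
  have WWt: "W * W\<^sup>T = 1\<^sub>m D" using mat_mult_left_right_inverse[OF Wt' W WtW] .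
  have "W * W\<^sup>T = four_block_mat (U * U\<^sup>T + V * V\<^sup>T) (U * 0\<^sub>m d 0 + V * 0\<^sub>m e 0)
      (0\<^sub>m 0 d * U\<^sup>T + 0\<^sub>m 0 e * V\<^sup>T) (0\<^sub>m 0 d * 0\<^sub>m d 0 + 0\<^sub>m 0 e * 0\<^sub>m e 0)"
    unfolding Wt unfolding W_def using U V by (subst mult_four_block_mat) auto
  then have blk: "four_block_mat (U * U\<^sup>T + V * V\<^sup>T) (U * 0\<^sub>m d 0 + V * 0\<^sub>m e 0)
      (0\<^sub>m 0 d * U\<^sup>T + 0\<^sub>m 0 e * V\<^sup>T) (0\<^sub>m 0 d * 0\<^sub>m d 0 + 0\<^sub>m 0 e * 0\<^sub>m e 0) = 1\<^sub>m D"
    using WWt by simp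
  show ?thesis
  proof (rule eq_matI)
    fix i j assume "i < dim_row (1\<^sub>m D)" "j < dim_col (1\<^sub>m D)"
    then have ij: "i < D" "j < D" by auto
    have "four_block_mat (U * U\<^sup>T + V * V\<^sup>T) (U * 0\<^sub>m d 0 + V * 0\<^sub>m e 0)
      (0\<^sub>m 0 d * U\<^sup>T + 0\<^sub>m 0 e * V\<^sup>T) (0\<^sub>m 0 d * 0\<^sub>m d 0 + 0\<^sub>m 0 e * 0\<^sub>m e 0) $$ (i, j)
      = (U * U\<^sup>T + V * V\<^sup>T) $$ (i, j)"
      using ij U V by (subst index_mat_four_block) auto
    then show "(U * U\<^sup>T + V * V\<^sup>T) $$ (i, j) = 1\<^sub>m D $$ (i, j)" using blk by simp
  qed (use U V in auto)
qed


theorem lemma2: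
  fixes M U V :: "real mat" and D d :: nat
  assumes "psd M D"
    and "1 \<le> d" and "d < D"
    and "U \<in> carrier_mat D d" and "V \<in> carrier_mat D (D - d)"
    and "U\<^sup>T * U = 1\<^sub>m d" and "V\<^sup>T * V = 1\<^sub>m (D - d)" and "U\<^sup>T * V = 0\<^sub>m d (D - d)"
  shows "sigma M D \<ge>
           ((sigma (V\<^sup>T * M * V) (D - d) + sigma (U\<^sup>T * M * U) d)
             - sqrt ((sigma (V\<^sup>T * M * V) (D - d) - sigma (U\<^sup>T * M * U) d)\<^sup>2
                     + 4 * (spec_norm (U\<^sup>T * M * V))\<^sup>2)) / 2
       \<and> (spec_norm (U\<^sup>T * M * V)
             \<le> sqrt (sigma (V\<^sup>T * M * V) (D - d) * sigma (U\<^sup>T * M * U) d) / 2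
          \<longrightarrow> sigma M D \<ge> min (sigma (V\<^sup>T * M * V) (D - d)) (sigma (U\<^sup>T * M * U) d) / 3)"
proof -
  note psd = assms(1) and d1 = assms(2) and dD = assms(3) and U = assms(4) and V = assms(5)
    and UU = assms(6) and VV = assms(7) and UV = assms(8)
  define e where "e = D - d"
  have e0: "e > 0" unfolding e_def using dD by simp
  have d0: "d > 0" using d1 by simp
  have D0: "D > 0" using dD by simp
  have M: "M \<in> carrier_mat D D" and Msym: "M\<^sup>T = M"
    and Mpsd: "\<And>v. v \<in> carrier_vec D \<Longrightarrow> 0 \<le> v \<bullet> (M *\<^sub>v v)"
    using psd unfolding psd_def by auto
  have Ve: "V \<in> carrier_mat D e" using V unfolding e_def .
  define A where "A = U\<^sup>T * M * U"
  define C where "C = V\<^sup>T * M * V"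
  define B where "B = U\<^sup>T * M * V"
  define x where "x = sigma C e"
  define y where "y = sigma A d"
  define z where "z = spec_norm B"
  have A: "A \<in> carrier_mat d d" unfolding A_def using U M by simp
  have C: "C \<in> carrier_mat e e" unfolding C_def using Ve M by simp
  have B: "B \<in> carrier_mat d e" unfolding B_def using U Ve M by simp
  have symA: "A\<^sup>T = A" unfolding A_def by (rule sym_congr[OF U M Msym])
  have symC: "C\<^sup>T = C" unfolding C_def by (rule sym_congr[OF Ve M Msym])
  note eA = sym_min_eig[OF A symA d0, folded y_def]
  note eC = sym_min_eig[OF C symC e0, folded x_def]
  note eM = sym_min_eig[OF M Msym D0]
  note zb = spec_norm_bound[OF B e0, folded z_def]
  obtain q where q: "q \<in> carrier_vec D" and q1: "q \<bullet> q = 1" and qM: "q \<bullet> (M *\<^sub>v q) = sigma M D"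
    using eM by blast
  define a where "a = U\<^sup>T *\<^sub>v q"
  define b where "b = V\<^sup>T *\<^sub>v q"
  have a: "a \<in> carrier_vec d" unfolding a_def using U q by simp
  have b: "b \<in> carrier_vec e" unfolding b_def using Ve q by simp
  have Ua: "U *\<^sub>v a \<in> carrier_vec D" using U a by simp
  have Vb: "V *\<^sub>v b \<in> carrier_vec D" using Ve b by simp
  have bid: "U * U\<^sup>T + V * V\<^sup>T = 1\<^sub>m D"
    by (rule block_id[OF U V _ UU VV UV]) (use dD in simp)
  have UUt: "U * U\<^sup>T \<in> carrier_mat D D" and VVt: "V * V\<^sup>T \<in> carrier_mat D D" using U Ve by auto
  have qsplit: "q = U *\<^sub>v a + V *\<^sub>v b"
  proof -
    have "q = (U * U\<^sup>T + V * V\<^sup>T) *\<^sub>v q" unfolding bid using q by simp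
    also have "\<dots> = (U * U\<^sup>T) *\<^sub>v q + (V * V\<^sup>T) *\<^sub>v q"
      using UUt VVt q by (rule add_mult_distrib_mat_vec)
    also have "\<dots> = U *\<^sub>v a + V *\<^sub>v b" unfolding a_def b_def using U Ve q
      by (simp add: assoc_mult_mat_vec[of _ D d _ D] assoc_mult_mat_vec[of _ D e _ D])
    finally show ?thesis .
  qed
  have ab1: "a \<bullet> a + b \<bullet> b = 1"
  proof -
    have "a \<bullet> a = q \<bullet> ((U * U\<^sup>T) *\<^sub>v q)"
      using transpose_vec_mult_scalar[of U D d "U\<^sup>T *\<^sub>v q" q] U q unfolding a_def
      by (simp add: assoc_mult_mat_vec[of _ D d _ D])
    moreover have "b \<bullet> b = q \<bullet> ((V * V\<^sup>T) *\<^sub>v q)"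
      using transpose_vec_mult_scalar[of V D e "V\<^sup>T *\<^sub>v q" q] Ve q unfolding b_def
      by (simp add: assoc_mult_mat_vec[of _ D e _ D])
    moreover have "q \<bullet> ((U * U\<^sup>T) *\<^sub>v q) + q \<bullet> ((V * V\<^sup>T) *\<^sub>v q) = q \<bullet> q"
    proof -
      have "q \<bullet> ((U * U\<^sup>T) *\<^sub>v q) + q \<bullet> ((V * V\<^sup>T) *\<^sub>v q) = q \<bullet> ((U * U\<^sup>T) *\<^sub>v q + (V * V\<^sup>T) *\<^sub>v q)"
        using UUt VVt q by (simp add: scalar_prod_add_distrib[of _ D])
      also have "(U * U\<^sup>T) *\<^sub>v q + (V * V\<^sup>T) *\<^sub>v q = q"
        using add_mult_distrib_mat_vec[OF UUt VVt q, symmetric] bid q by simp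
      finally show ?thesis .
    qed
    ultimately show ?thesis using q1 by simp
  qed
  have expand: "sigma M D = a \<bullet> (A *\<^sub>v a) + 2 * (a \<bullet> (B *\<^sub>v b)) + b \<bullet> (C *\<^sub>v b)"
  proof -
    have MUa: "M *\<^sub>v (U *\<^sub>v a) \<in> carrier_vec D" and MVb: "M *\<^sub>v (V *\<^sub>v b) \<in> carrier_vec D"
      using M Ua Vb by auto
    have "q \<bullet> (M *\<^sub>v q) = (U *\<^sub>v a + V *\<^sub>v b) \<bullet> (M *\<^sub>v (U *\<^sub>v a) + M *\<^sub>v (V *\<^sub>v b))"
      unfolding qsplit using M Ua Vb by (simp add: mult_add_distrib_mat_vec)
    also have "\<dots> = (U *\<^sub>v a) \<bullet> (M *\<^sub>v (U *\<^sub>v a)) + (U *\<^sub>v a) \<bullet> (M *\<^sub>v (V *\<^sub>v b))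
        + ((V *\<^sub>v b) \<bullet> (M *\<^sub>v (U *\<^sub>v a)) + (V *\<^sub>v b) \<bullet> (M *\<^sub>v (V *\<^sub>v b)))"
      using Ua Vb MUa MVb
      by (simp add: add_scalar_prod_distrib[of _ D] scalar_prod_add_distrib[of _ D])
    also have "(V *\<^sub>v b) \<bullet> (M *\<^sub>v (U *\<^sub>v a)) = (U *\<^sub>v a) \<bullet> (M *\<^sub>v (V *\<^sub>v b))"
    proof -
      have "(V *\<^sub>v b) \<bullet> (M *\<^sub>v (U *\<^sub>v a)) = (M\<^sup>T *\<^sub>v (V *\<^sub>v b)) \<bullet> (U *\<^sub>v a)"
        using transpose_vec_mult_scalar[OF M Ua Vb] by simp
      also have "\<dots> = (U *\<^sub>v a) \<bullet> (M *\<^sub>v (V *\<^sub>v b))" unfolding Msym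
        using MVb Ua by (simp add: comm_scalar_prod[of _ D])
      finally show ?thesis .
    qed
    also have "(U *\<^sub>v a) \<bullet> (M *\<^sub>v (U *\<^sub>v a)) = a \<bullet> (A *\<^sub>v a)"
      unfolding A_def by (rule quad_congr[OF U U M a a])
    also have "(U *\<^sub>v a) \<bullet> (M *\<^sub>v (V *\<^sub>v b)) = a \<bullet> (B *\<^sub>v b)"
      unfolding B_def by (rule quad_congr[OF U Ve M a b])
    also have "(V *\<^sub>v b) \<bullet> (M *\<^sub>v (V *\<^sub>v b)) = b \<bullet> (C *\<^sub>v b)"
      unfolding C_def by (rule quad_congr[OF Ve Ve M b b])
    finally show ?thesis using qM by simp
  qed
  define s where "s = vnorm a"
  define t where "t = vnorm b"
  have s0: "s \<ge> 0" and t0: "t \<ge> 0" unfolding s_def t_def by (auto intro: vnorm_nonneg)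
  have s2: "s\<^sup>2 = a \<bullet> a" and t2: "t\<^sup>2 = b \<bullet> b" unfolding s_def t_def by (auto simp: vnorm_sq)
  have st: "s\<^sup>2 + t\<^sup>2 = 1" using ab1 s2 t2 by simp
  have z0: "z \<ge> 0" using zb by simp
  have qa: "a \<bullet> (A *\<^sub>v a) \<ge> y * s\<^sup>2" using eA a s2 by (simp add: mult.commute)
  have qc: "b \<bullet> (C *\<^sub>v b) \<ge> x * t\<^sup>2" using eC b t2 by (simp add: mult.commute)
  have Bb: "B *\<^sub>v b \<in> carrier_vec d" using B b by simp
  have "\<bar>a \<bullet> (B *\<^sub>v b)\<bar> \<le> s * vnorm (B *\<^sub>v b)" unfolding s_def by (rule cauchy_schwarz_vec[OF a Bb])
  also have "\<dots> \<le> s * (z * t)" unfolding t_def using zb b s0 by (intro mult_left_mono) auto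
  finally have qb: "a \<bullet> (B *\<^sub>v b) \<ge> - (z * s * t)" by (simp add: mult.assoc mult.left_commute)
  have low: "sigma M D \<ge> y * s\<^sup>2 + x * t\<^sup>2 - 2 * \<bar>z\<bar> * s * t"
    using expand qa qb qc z0 by simp
  have part1: "sigma M D \<ge> ((x + y) - sqrt ((x - y)\<^sup>2 + 4 * z\<^sup>2)) / 2"
    using low alg1[OF s0 t0 st, of x y z] by linarith
  have x0: "x \<ge> 0"
  proof -
    obtain w where w: "w \<in> carrier_vec e" "w \<bullet> (C *\<^sub>v w) = x" using eC by blast
    have "w \<bullet> (C *\<^sub>v w) = (V *\<^sub>v w) \<bullet> (M *\<^sub>v (V *\<^sub>v w))"
      unfolding C_def by (rule quad_congr[OF Ve Ve M w(1) w(1), symmetric])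
    also have "\<dots> \<ge> 0" using Mpsd Ve w by simp
    finally show ?thesis using w by simp
  qed
  have y0: "y \<ge> 0"
  proof -
    obtain w where w: "w \<in> carrier_vec d" "w \<bullet> (A *\<^sub>v w) = y" using eA by blast
    have "w \<bullet> (A *\<^sub>v w) = (U *\<^sub>v w) \<bullet> (M *\<^sub>v (U *\<^sub>v w))"
      unfolding A_def by (rule quad_congr[OF U U M w(1) w(1), symmetric])
    also have "\<dots> \<ge> 0" using Mpsd U w by simp
    finally show ?thesis using w by simp
  qed
  have part2: "z \<le> sqrt (x * y) / 2 \<longrightarrow> sigma M D \<ge> min x y / 3"
    using alg2[OF x0 y0 z0] part1 by auto
  show ?thesis using part1 part2
    unfolding x_def y_def z_def A_def B_def C_def e_def by blast
qed

end
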